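(* Let $q\geq2$ and $0<\alpha<1/q$. There exists a deterministic algorithm for Anti-$q$-SG which on every input of length $n$ incurs a cost of at most $\alpha n$ and which reads $$b=K_{1/q}(\alpha)\,n+O(\log n+\log\log q)=(1-h_q(1-\alpha))\,n\log_2q+O(\log n+\log\log q)$$ bits of advice.
   Context: Anti-$q$-SG: inputs $(n,x_1,\dots,x_n)$ with $x_i\in[q]$; in round $i$ the algorithm knows $n,x_1,\dots,x_{i-1}$ and outputs $y_i\in[q]$, paying $1$ if $y_i=x_i$ and $0$ otherwise; $n$ is the length. Advice is read from an infinite tape prepared by an oracle knowing the whole input. $K_y(x)=x\log_2(x/y)+(1-x)\log_2((1-x)/(1-y))$; $h_q(x)=x\log_q(q-1)-x\log_qx-(1-x)\log_q(1-x)$. *)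

theory Defs
  imports Complex_Main
begin

definition K :: "real \<Rightarrow> real \<Rightarrow> real" where
  "K y x = x * log 2 (x / y) + (1 - x) * log 2 ((1 - x) / (1 - y))"

definition h :: "nat \<Rightarrow> real \<Rightarrow> real" where
  "h q x = x * log (real q) (real q - 1) - x * log (real q) x - (1 - x) * log (real q) (1 - x)"

(* Symbols are [q] = {0..<q}.  A deterministic online algorithm with advice is a function
   alg n prefix tape: given the length n, the already revealed prefix x_1..x_{i-1}
   (as a list of length i-1) and the infinite advice tape, it outputs y_i. *)
type_synonym alg = "nat \<Rightarrow> nat list \<Rightarrow> (nat \<Rightarrow> bool) \<Rightarrow> nat"

definition valid_alg :: "nat \<Rightarrow> alg \<Rightarrow> bool" where
  "valid_alg q A \<longleftrightarrow> (\<forall>n p t. A n p t < q)"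

definition cost :: "alg \<Rightarrow> nat list \<Rightarrow> (nat \<Rightarrow> bool) \<Rightarrow> nat" where
  "cost A x t = card {i. i < length x \<and> A (length x) (take i x) t = x ! i}"

definition reads_at_most :: "alg \<Rightarrow> nat list \<Rightarrow> (nat \<Rightarrow> bool) \<Rightarrow> nat \<Rightarrow> bool" where
  "reads_at_most A x t b \<longleftrightarrow>
     (\<forall>t'. (\<forall>j<b. t' j = t j) \<longrightarrow>
        (\<forall>i<length x. A (length x) (take i x) t' = A (length x) (take i x) t))"

end

theory Submission
  imports Defs
begin


definition words :: "nat \<Rightarrow> nat \<Rightarrow> nat list set" where
  "words q n = {xs. set xs \<subseteq> {..<q} \<and> length xs = n}"

fun agree :: "nat list \<Rightarrow> nat list \<Rightarrow> nat" where
  "agree [] _ = 0"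
| "agree _ [] = 0"
| "agree (a#x) (b#y) = (if a = b then 1 else 0) + agree x y"

lemma agree_Nil2 [simp]: "agree x [] = 0"
  by (cases x) auto

lemma agree_sym: "agree x y = agree y x"
  by (induction x y rule: agree.induct) auto

lemma finite_words: "finite (words q n)"
  unfolding words_def by (rule finite_lists_length_eq) simp

lemma card_words: "card (words q n) = q ^ n"
  unfolding words_def by (subst card_lists_length_eq) simp_all

lemma agree_card: "length y = length x \<Longrightarrow>
   card {i. i < length x \<and> y ! i = x ! i} = agree x y"
proof (induction x arbitrary: y)
  case Nil then show ?case by simp
next
  case (Cons a x)
  then obtain b y' where y: "y = b # y'" and ly: "length y' = length x"
    by (cases y) auto
  have eq: "{i. i < length (a#x) \<and> y ! i = (a#x) ! i}
     = (if b = a then {0} else {}) \<union> Suc ` {i. i < length x \<and> y' ! i = x ! i}"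
    (is "?L = ?R")
  proof
    show "?L \<subseteq> ?R"
    proof
      fix i assume "i \<in> ?L"
      then show "i \<in> ?R" using y by (cases i) auto
    qed
  next
    show "?R \<subseteq> ?L" using y by auto
  qed
  have "card ?R = (if b = a then 1 else 0) + card {i. i < length x \<and> y' ! i = x ! i}"
    by (auto simp: card_image)
  then show ?case using eq Cons.IH[OF ly] y by auto
qed

lemma words_Suc_card:
  "card {y \<in> words q (Suc n). P y} = (\<Sum>b<q. card {y \<in> words q n. P (b#y)})"
proof -
  have eq: "{y \<in> words q (Suc n). P y} = (\<Union>b\<in>{..<q}. (#) b ` {y \<in> words q n. P (b#y)})"
  proof
    show "{y \<in> words q (Suc n). P y} \<subseteq> (\<Union>b\<in>{..<q}. (#) b ` {y \<in> words q n. P (b#y)})"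
    proof
      fix y assume "y \<in> {y \<in> words q (Suc n). P y}"
      then show "y \<in> (\<Union>b\<in>{..<q}. (#) b ` {y \<in> words q n. P (b#y)})"
        by (cases y) (auto simp: words_def)
    qed
  next
    show "(\<Union>b\<in>{..<q}. (#) b ` {y \<in> words q n. P (b#y)}) \<subseteq> {y \<in> words q (Suc n). P y}"
      by (auto simp: words_def)
  qed
  have fin: "\<And>b. finite {y \<in> words q n. P (b#y)}"
    using finite_words by auto
  show ?thesis unfolding eq
    by (subst card_UN_disjoint) (auto simp: fin card_image)
qed

lemma exact_count:
  assumes "q \<ge> 1"
  shows "x \<in> words q n \<Longrightarrow> card {y \<in> words q n. agree x y = k} = (n choose k) * (q-1)^(n-k)"
proof (induction n arbitrary: x k)
  case 0
  then have "x = []" by (simp add: words_def)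
  moreover have "words q 0 = {[]}" by (auto simp: words_def)
  ultimately show ?case by (cases k) auto
next
  case (Suc n)
  then obtain a x' where x: "x = a # x'" and a: "a < q" and x': "x' \<in> words q n"
    by (cases x) (auto simp: words_def)
  have "card {y \<in> words q (Suc n). agree x y = k}
      = (\<Sum>b<q. card {y \<in> words q n. (if a = b then 1 else 0) + agree x' y = k})"
    unfolding x by (subst words_Suc_card) simp
  also have "\<dots> = card {y \<in> words q n. 1 + agree x' y = k}
      + (\<Sum>b\<in>{..<q}-{a}. card {y \<in> words q n. agree x' y = k})"
    using a by (subst sum.remove[of _ a]) auto
  also have "(\<Sum>b\<in>{..<q}-{a}. card {y \<in> words q n. agree x' y = k})
      = (q - 1) * ((n choose k) * (q-1)^(n-k))"
    using a Suc.IH[OF x'] by simp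
  finally have 1: "card {y \<in> words q (Suc n). agree x y = k}
      = card {y \<in> words q n. 1 + agree x' y = k} + (q - 1) * ((n choose k) * (q-1)^(n-k))" .
  show ?case
  proof (cases k)
    case 0
    then show ?thesis using 1 by simp
  next
    case (Suc k')
    have "{y \<in> words q n. 1 + agree x' y = k} = {y \<in> words q n. agree x' y = k'}"
      using Suc by auto
    then have 2: "card {y \<in> words q n. 1 + agree x' y = k} = (n choose k') * (q-1)^(n-k')"
      using Suc.IH[OF x'] by simp
    show ?thesis
    proof (cases "k' < n")
      case True
      obtain r where r: "q - 1 = r" by blast
      have p: "r^(n-k') = r * r^(n - Suc k')"
        using True by (metis Suc_diff_Suc power_Suc)
      have "card {y \<in> words q (Suc n). agree x y = k}
          = ((n choose k') + (n choose Suc k')) * (r * r^(n - Suc k'))"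
      proof -
        have "card {y \<in> words q (Suc n). agree x y = k}
           = (n choose k') * r^(n-k') + r * ((n choose Suc k') * r^(n - Suc k'))"
          using 1 2 r Suc by simp
        then show ?thesis unfolding p by (simp add: algebra_simps)
      qed
      also have "\<dots> = (Suc n choose k) * r^(Suc n - k)"
        using Suc p by simp
      finally show ?thesis using r by simp
    next
      case False
      then show ?thesis using 1 2 Suc by (cases "k' = n") auto
    qed
  qed
qed



lemma words_ne: "replicate n 0 \<in> words q n" if "q \<ge> 1"
  using that by (auto simp: words_def)

lemma exists_good:
  assumes U: "U \<subseteq> words q n" and q: "q \<ge> 1"
    and L: "\<forall>x\<in>words q n. L \<le> card {y\<in>words q n. agree x y \<le> k}"
  shows "\<exists>y\<in>words q n. card U * L \<le> card {x\<in>U. agree x y \<le> k} * q^n"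
proof -
  let ?W = "words q n"
  define c where "c y = card {x\<in>U. agree x y \<le> k}" for y
  have finW: "finite ?W" by (rule finite_words)
  have finU: "finite U" using U finW finite_subset by blast
  have neW: "?W \<noteq> {}" using words_ne[OF q] by blast
  have "(\<Sum>y\<in>?W. c y) = (\<Sum>y\<in>?W. \<Sum>x\<in>U. if agree x y \<le> k then 1 else 0)"
    unfolding c_def using finU by (simp add: sum.inter_filter[symmetric])
  also have "\<dots> = (\<Sum>x\<in>U. \<Sum>y\<in>?W. if agree x y \<le> k then 1 else 0)"
    by (rule sum.swap)
  also have "\<dots> = (\<Sum>x\<in>U. card {y\<in>?W. agree x y \<le> k})"
    using finW by (simp add: sum.inter_filter[symmetric])
  finally have s: "(\<Sum>y\<in>?W. c y) = (\<Sum>x\<in>U. card {y\<in>?W. agree x y \<le> k})" .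
  have "card U * L \<le> (\<Sum>x\<in>U. card {y\<in>?W. agree x y \<le> k})"
    using L U by (metis (no_types, lifting) sum_bounded_below subsetD mult.commute of_nat_id)
  also have "\<dots> = (\<Sum>y\<in>?W. c y)" using s by simp
  finally have 1: "card U * L \<le> (\<Sum>y\<in>?W. c y)" .
  obtain y where y: "y \<in> ?W" "c y = Max (c ` ?W)"
    using finW neW by (metis (mono_tags, lifting) Max_in finite_imageI image_iff image_is_empty)
  have "(\<Sum>y\<in>?W. c y) \<le> card ?W * c y"
    using y finW by (metis (no_types, lifting) Max_ge finite_imageI image_eqI sum_bounded_above of_nat_id)
  then have "card U * L \<le> c y * q^n" using 1 card_words[of q n] by (simp add: mult.commute)
  then show ?thesis using y(1) unfolding c_def by blast
qed

lemma greedy: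
  assumes q: "q \<ge> 1"
    and L: "\<forall>x\<in>words q n. L \<le> card {y\<in>words q n. agree x y \<le> k}"
  shows "\<exists>Ys. length Ys = m \<and> set Ys \<subseteq> words q n \<and>
     real (card {x\<in>words q n. \<forall>y\<in>set Ys. k < agree x y})
        \<le> real (q^n) * (1 - real L / real (q^n))^m"
proof (induction m)
  case 0
  show ?case using card_words[of q n] by (intro exI[of _ "[]"]) auto
next
  case (Suc m)
  then obtain Ys where Ys: "length Ys = m" "set Ys \<subseteq> words q n"
    "real (card {x\<in>words q n. \<forall>y\<in>set Ys. k < agree x y})
        \<le> real (q^n) * (1 - real L / real (q^n))^m" by blast
  define U where "U = {x\<in>words q n. \<forall>y\<in>set Ys. k < agree x y}"
  have UW: "U \<subseteq> words q n" unfolding U_def by auto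
  obtain y where y: "y \<in> words q n" "card U * L \<le> card {x\<in>U. agree x y \<le> k} * q^n"
    using exists_good[OF UW q L] by blast
  have finU: "finite U" using UW finite_words finite_subset by blast
  have Npos: "real (q^n) > 0" using q by simp
  have LN: "L \<le> q^n"
  proof -
    have "L \<le> card {z\<in>words q n. agree (replicate n 0) z \<le> k}"
      using L words_ne[OF q] by blast
    also have "\<dots> \<le> card (words q n)" using finite_words by (intro card_mono) auto
    finally show ?thesis using card_words by simp
  qed
  have nonneg: "0 \<le> 1 - real L / real (q^n)" using LN Npos by (simp add: field_simps)
  have new: "{x\<in>words q n. \<forall>z\<in>set (y#Ys). k < agree x z} = U - {x\<in>U. agree x y \<le> k}"
    unfolding U_def by auto
  have cd: "card (U - {x\<in>U. agree x y \<le> k}) = card U - card {x\<in>U. agree x y \<le> k}"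
    using finU by (intro card_Diff_subset) auto
  have cle: "card {x\<in>U. agree x y \<le> k} \<le> card U" using finU by (intro card_mono) auto
  have ry: "real (card U) * real L \<le> real (card {x\<in>U. agree x y \<le> k}) * real (q^n)"
    using y(2) by (metis of_nat_le_iff of_nat_mult)
  have "real (card (U - {x\<in>U. agree x y \<le> k}))
      = real (card U) - real (card {x\<in>U. agree x y \<le> k})" using cd cle by simp
  also have "\<dots> \<le> real (card U) * (1 - real L / real (q^n))"
  proof -
    have "real (card U) * real L / real (q^n) \<le> real (card {x\<in>U. agree x y \<le> k})"
      using ry Npos by (simp add: divide_le_eq)
    then show ?thesis by (simp add: algebra_simps)
  qed
  also have "\<dots> \<le> real (q^n) * (1 - real L / real (q^n))^m * (1 - real L / real (q^n))"
    using Ys(3) nonneg unfolding U_def by (intro mult_right_mono) auto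
  finally show ?case using new Ys y(1)
    by (intro exI[of _ "y#Ys"]) (auto simp: ac_simps)
qed



lemma binom_ratio: "real (n choose Suc j) * real (Suc j) = real (n choose j) * real (n - j)"
proof -
  have "Suc j * (n choose Suc j) = (n - j) * (n choose j)"
    using binomial_absorption[of j n] binomial_absorb_comp[of n j] by simp
  then show ?thesis by (metis of_nat_mult mult.commute)
qed

lemma tk_bound:
  fixes \<alpha> :: real
  assumes a0: "0 < \<alpha>" and a1: "\<alpha> < 1/2" and k: "k = nat \<lfloor>\<alpha> * n\<rfloor>" and n1: "n \<ge> 1"
  shows "real (n choose k) * \<alpha>^k * (1-\<alpha>)^(n-k) \<ge> 1 / (2 * (real n + 1))"
proof -
  define t where "t j = real (n choose j) * \<alpha>^j * (1-\<alpha>)^(n-j)" for j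
  have tnn: "t j \<ge> 0" for j unfolding t_def using a0 a1 by simp
  have kle: "real k \<le> \<alpha> * n" and kgt: "\<alpha> * n < real k + 1"
    using k a0 by (auto simp: of_nat_nat)
  have kn: "k < n"
  proof -
    have "\<alpha> * n < n" using a1 a0 n1 by simp
    then show ?thesis using kle by linarith
  qed
  have ratio: "t (Suc j) * real (Suc j) * (1-\<alpha>) = t j * real (n - j) * \<alpha>" if "j < n" for j
  proof -
    have p: "(1-\<alpha>)^(n-j) = (1-\<alpha>) * (1-\<alpha>)^(n - Suc j)"
      using that by (metis Suc_diff_Suc power_Suc)
    have "t (Suc j) * real (Suc j) * (1-\<alpha>)
        = (real (n choose Suc j) * real (Suc j)) * \<alpha> * \<alpha>^j * ((1-\<alpha>) * (1-\<alpha>)^(n - Suc j))"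
      unfolding t_def by (simp only: power_Suc mult_ac)
    also have "\<dots> = (real (n choose j) * real (n - j)) * \<alpha> * \<alpha>^j * (1-\<alpha>)^(n-j)"
      unfolding binom_ratio p ..
    also have "\<dots> = t j * real (n - j) * \<alpha>"
      unfolding t_def by (simp only: mult_ac)
    finally show ?thesis .
  qed
  have up: "t j \<le> t k" if "j \<le> k" for j
    using that
  proof (induction rule: dec_induct)
    case base then show ?case by simp
  next
    case (step i)
    have "real (Suc i) \<le> \<alpha> * n" using step.hyps(2) kle by linarith
    then have "real (Suc i) * (1-\<alpha>) \<le> real (n - i) * \<alpha>"
      using step.hyps kn a0 by (simp add: of_nat_diff algebra_simps)
    then have "t i * (real (Suc i) * (1-\<alpha>)) \<le> t i * (real (n - i) * \<alpha>)"
      using tnn by (intro mult_left_mono) auto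
    also have "\<dots> = t (Suc i) * (real (Suc i) * (1-\<alpha>))"
      using ratio[of i] step.hyps kn by (simp add: mult.assoc)
    finally have "t i \<le> t (Suc i)" using a1 by (simp add: mult_le_cancel_right)
    then show ?case using step.IH by simp
  qed
  have down: "t j \<le> t (Suc k)" if "Suc k \<le> j" for j
    using that
  proof (induction rule: dec_induct)
    case base then show ?case by simp
  next
    case (step i)
    have "t (Suc i) \<le> t i"
    proof (cases "i < n")
      case False
      then have "t (Suc i) = 0" unfolding t_def by simp
      then show ?thesis using tnn by simp
    next
      case True
      have "\<alpha> * n + \<alpha> < real (Suc i)" using step.hyps(1) kgt a1 by simp
      then have "real (n - i) * \<alpha> \<le> real (Suc i) * (1-\<alpha>)"
        using True by (simp add: of_nat_diff algebra_simps)
      then have "t i * (real (n - i) * \<alpha>) \<le> t i * (real (Suc i) * (1-\<alpha>))"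
        using tnn by (intro mult_left_mono) auto
      moreover have "t i * (real (n - i) * \<alpha>) = t (Suc i) * (real (Suc i) * (1-\<alpha>))"
        using ratio[of i] True by (simp add: mult.assoc)
      ultimately show ?thesis using a1 by (simp add: mult_le_cancel_right)
    qed
    then show ?case using step.IH by simp
  qed
  have sk: "t (Suc k) \<le> 2 * t k"
  proof -
    have "t (Suc k) * real (Suc k) * (1-\<alpha>) = t k * real (n - k) * \<alpha>" using ratio kn by simp
    also have "\<dots> \<le> t k * (\<alpha> * n)"
      using tnn a0 kn by (simp add: of_nat_diff algebra_simps mult_left_mono)
    also have "\<dots> \<le> t k * real (Suc k)" using kgt tnn by (intro mult_left_mono) auto
    finally have "t (Suc k) * (1-\<alpha>) * real (Suc k) \<le> t k * real (Suc k)" by (simp add: ac_simps)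
    then have "t (Suc k) * (1-\<alpha>) \<le> t k" by (simp add: mult_le_cancel_right)
    moreover have "t (Suc k) * (1/2) \<le> t (Suc k) * (1-\<alpha>)" using tnn a1 by (intro mult_left_mono) auto
    ultimately show ?thesis by simp
  qed
  have all: "t j \<le> 2 * t k" for j
  proof (cases "j \<le> k")
    case True then show ?thesis using up[OF True] tnn[of k] by simp
  next
    case False then show ?thesis using down[of j] sk by simp
  qed
  have "1 = (\<alpha> + (1-\<alpha>))^n" by simp
  also have "\<dots> = (\<Sum>j\<le>n. t j)" unfolding t_def binomial_ring by simp
  also have "\<dots> \<le> (\<Sum>j\<le>n. 2 * t k)" by (intro sum_mono all)
  also have "\<dots> = (real n + 1) * (2 * t k)" by simp
  finally have "1 \<le> (real n + 1) * (2 * t k)" .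
  then show ?thesis unfolding t_def by (simp add: field_simps)
qed



lemma ln2_ge: "ln (2::real) \<ge> 1/2"
proof -
  have "ln (1/2::real) \<le> 1/2 - 1" by (rule ln_le_minus_one) simp
  then show ?thesis by (simp add: ln_div)
qed

lemma xlogx: fixes x :: real assumes "0 < x" shows "- x * log 2 x \<le> 2"
proof -
  have "ln (1/x) \<le> 1/x - 1" using assms by (intro ln_le_minus_one) simp
  then have "- ln x \<le> 1/x - 1" using assms by (simp add: ln_div)
  then have "x * (- ln x) \<le> x * (1/x - 1)" using assms by (intro mult_left_mono) auto
  then have 1: "- x * ln x \<le> 1" using assms by (simp add: algebra_simps)
  have "- x * log 2 x = (- x * ln x) / ln 2" by (simp add: log_def)
  also have "\<dots> \<le> 1 / ln 2" using 1 ln2_ge by (intro divide_right_mono) auto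
  also have "\<dots> \<le> 2" using ln2_ge by (simp add: field_simps)
  finally show ?thesis .
qed

lemma delta_bound:
  fixes \<alpha> :: real and n k :: nat
  assumes a0: "0 < \<alpha>" and a1: "\<alpha> < 1" and k: "k = nat \<lfloor>\<alpha> * n\<rfloor>" and n1: "n \<ge> 1"
  shows "- (\<alpha> * n - k) * log 2 \<alpha> \<le> log 2 n + 2"
proof -
  have kle: "real k \<le> \<alpha> * n" and kgt: "\<alpha> * n < real k + 1"
    using k a0 by (auto simp: of_nat_nat)
  have la: "log 2 \<alpha> < 0" using a0 a1 by simp
  have ln0: "log 2 (real n) \<ge> 0" using n1 by simp
  show ?thesis
  proof (cases "k = 0")
    case False
    then have "1 \<le> \<alpha> * n" using kle by linarith
    then have "1 / real n \<le> \<alpha>" using n1 by (simp add: field_simps)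
    then have "log 2 (1 / real n) \<le> log 2 \<alpha>" using n1 a0 by (subst log_le_cancel_iff) auto
    then have "- log 2 \<alpha> \<le> log 2 n" using n1 by (simp add: log_divide)
    moreover have "- (\<alpha> * n - k) * log 2 \<alpha> \<le> - log 2 \<alpha>"
    proof -
      have "(\<alpha> * n - k) * (- log 2 \<alpha>) \<le> 1 * (- log 2 \<alpha>)"
        using kgt la by (intro mult_right_mono) auto
      then show ?thesis by (simp only: mult_minus_left mult_minus_right mult_1_left)
    qed
    ultimately show ?thesis by linarith
  next
    case True
    define x where "x = \<alpha> * n"
    have x0: "0 < x" using a0 n1 unfolding x_def by simp
    have x1: "x < 1" using kgt True unfolding x_def by simp
    have "\<alpha> = x / n" unfolding x_def using n1 by simp
    then have e: "log 2 \<alpha> = log 2 x - log 2 n" using x0 n1 by (simp add: log_divide)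
    have d: "\<alpha> * n - k = x" using True x_def by simp
    have "- (\<alpha> * n - k) * log 2 \<alpha> = - x * (log 2 x - log 2 n)"
      by (simp only: e d)
    then have "- (\<alpha> * n - k) * log 2 \<alpha> = - x * log 2 x + x * log 2 n"
      by (simp add: algebra_simps)
    also have "\<dots> \<le> 2 + 1 * log 2 n"
      using xlogx[OF x0] x1 ln0 by (intro add_mono mult_right_mono) auto
    finally show ?thesis by simp
  qed
qed

lemma log_bound:
  fixes \<alpha> :: real and q n k :: nat
  assumes q: "q \<ge> 2" and a0: "0 < \<alpha>" and a1: "\<alpha> < 1 / real q" and n1: "n \<ge> 1"
    and k: "k = nat \<lfloor>\<alpha> * n\<rfloor>"
  shows "log 2 (real q ^ n) - log 2 (real (n choose k) * real (q-1)^(n-k))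
     \<le> n * K (1 / real q) \<alpha> + 2 * log 2 n + 4"
proof -
  have "1 / real q \<le> 1/2" using q by (simp add: field_simps)
  then have a2: "\<alpha> < 1/2" using a1 by linarith
  have kle: "real k \<le> \<alpha> * n" and kgt: "\<alpha> * n < real k + 1"
    using k a0 by (auto simp: of_nat_nat)
  have kn: "k \<le> n"
  proof -
    have "\<alpha> * n \<le> n" using a2 n1 by simp
    then show ?thesis using kle by linarith
  qed
  define T where "T = real (n choose k) * \<alpha>^k * (1-\<alpha>)^(n-k)"
  have T: "T \<ge> 1 / (2 * (real n + 1))" unfolding T_def using tk_bound[OF a0 a2 k n1] .
  have Cpos: "real (n choose k) > 0" using kn by simp
  have qpos: "real q - 1 > 0" using q by simp
  define la where "la = log 2 \<alpha>"
  define lb where "lb = log 2 (1-\<alpha>)"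
  define lc where "lc = log 2 (real q - 1)"
  define lq where "lq = log 2 (real q)"
  define lC where "lC = log 2 (real (n choose k))"
  have lT: "log 2 T = lC + k * la + (n-k) * lb"
    unfolding T_def lC_def la_def lb_def using Cpos a0 a2
    by (simp add: log_mult log_nat_power)
  have lL: "log 2 (real (n choose k) * real (q-1)^(n-k)) = lC + (n-k) * lc"
    unfolding lC_def lc_def using Cpos qpos q by (simp add: log_mult log_nat_power of_nat_diff)
  have lN: "log 2 (real q ^ n) = n * lq" unfolding lq_def using q by (simp add: log_nat_power)
  have Kx: "K (1 / real q) \<alpha> = \<alpha> * (la + lq) + (1-\<alpha>) * (lb + lq - lc)"
  proof -
    have e1: "\<alpha> / (1 / real q) = \<alpha> * real q" by simp
    have e2: "(1 - \<alpha>) / (1 - 1 / real q) = (1-\<alpha>) * real q / (real q - 1)"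
      using q by (simp add: field_simps)
    show ?thesis unfolding K_def e1 e2 la_def lb_def lc_def lq_def
      using a0 a2 q qpos by (simp add: log_mult log_divide)
  qed
  have lTb: "log 2 T \<ge> - 2 - log 2 n"
  proof -
    have "1 / (2 * (real n + 1)) > 0" by simp
    then have Tp: "T > 0" using T by linarith
    have "log 2 (1 / (2 * (real n + 1))) \<le> log 2 T" using T Tp n1 by (subst log_le_cancel_iff) auto
    moreover have "log 2 (2 * real n + 2) = 1 + log 2 (real n + 1)"
      using log_mult[of 2 2 "real n + 1"] by (simp add: algebra_simps)
    ultimately have "- 1 - log 2 (real n + 1) \<le> log 2 T" by (simp add: log_divide log_mult)
    moreover have "log 2 (real n + 1) \<le> log 2 (2 * real n)" using n1 by (subst log_le_cancel_iff) auto
    moreover have "log 2 (2 * real n) = 1 + log 2 n" using n1 by (simp add: log_mult)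
    ultimately show ?thesis by linarith
  qed
  have db: "- (\<alpha> * n - k) * la \<le> log 2 n + 2" unfolding la_def
    using delta_bound[OF a0 _ k n1] a2 by simp
  have lb0: "lb \<le> 0" unfolding lb_def using a0 a2 by simp
  have lc0: "lc \<ge> 0" unfolding lc_def using q by simp
  have d0: "\<alpha> * n - k \<ge> 0" using kle by simp
  have p1: "(\<alpha> * n - k) * lb \<le> 0" using d0 lb0 by (simp add: mult_nonneg_nonpos)
  have p2: "(\<alpha> * n - k) * lc \<ge> 0" using d0 lc0 by simp
  have rnk: "real (n - k) = real n - real k" using kn by simp
  have ident: "n * lq - (lC + (n-k) * lc) - n * (\<alpha> * (la + lq) + (1-\<alpha>) * (lb + lq - lc))
      = - log 2 T + (\<alpha> * n - k) * lb - (\<alpha> * n - k) * lc - (\<alpha> * n - k) * la"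
    unfolding lT rnk by (simp add: algebra_simps)
  show ?thesis unfolding lN lL Kx using ident lTb db p1 p2 by linarith
qed



lemma K_ident:
  fixes \<alpha> :: real
  assumes q: "q \<ge> 2" and a0: "0 < \<alpha>" and a1: "\<alpha> < 1"
  shows "K (1 / real q) \<alpha> = (1 - h q (1 - \<alpha>)) * log 2 (real q)"
proof -
  have lq: "ln (real q) > 0" using q by simp
  have q1: "real q - 1 > 0" using q by simp
  have e1: "ln (\<alpha> / (1 / real q)) = ln \<alpha> + ln (real q)" using a0 q by (simp add: ln_mult)
  have e2: "ln ((1 - \<alpha>) / (1 - 1 / real q)) = ln (1-\<alpha>) + ln (real q) - ln (real q - 1)"
  proof -
    have "(1 - \<alpha>) / (1 - 1 / real q) = (1-\<alpha>) * real q / (real q - 1)"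
      using q by (simp add: field_simps)
    then show ?thesis using a1 q q1 by (simp add: ln_mult ln_div)
  qed
  show ?thesis unfolding K_def h_def log_def e1 e2 using lq
    by (simp add: field_simps)
qed

definition kk :: "real \<Rightarrow> nat \<Rightarrow> nat" where "kk \<alpha> n = nat \<lfloor>\<alpha> * real n\<rfloor>"
definition LL :: "nat \<Rightarrow> real \<Rightarrow> nat \<Rightarrow> nat" where
  "LL q \<alpha> n = (n choose kk \<alpha> n) * (q-1)^(n - kk \<alpha> n)"
definition MM :: "nat \<Rightarrow> real \<Rightarrow> nat \<Rightarrow> nat" where
  "MM q \<alpha> n = nat \<lfloor>real (q^n) / real (LL q \<alpha> n) * ln (real (q^n))\<rfloor> + 1"
definition good :: "nat \<Rightarrow> real \<Rightarrow> nat \<Rightarrow> nat list list \<Rightarrow> bool" where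
  "good q \<alpha> n Ys \<longleftrightarrow> length Ys = MM q \<alpha> n \<and> set Ys \<subseteq> words q n \<and>
     (\<forall>x\<in>words q n. \<exists>y\<in>set Ys. agree x y \<le> kk \<alpha> n)"
definition YS :: "nat \<Rightarrow> real \<Rightarrow> nat \<Rightarrow> nat list list" where
  "YS q \<alpha> n = (SOME Ys. good q \<alpha> n Ys)"
definition BB :: "nat \<Rightarrow> real \<Rightarrow> nat \<Rightarrow> nat" where
  "BB q \<alpha> n = nat \<lceil>log 2 (real (MM q \<alpha> n))\<rceil>"
definition dec :: "nat \<Rightarrow> (nat \<Rightarrow> bool) \<Rightarrow> nat" where
  "dec b t = (\<Sum>i<b. if t i then 2^i else 0)"
definition galg :: "nat \<Rightarrow> real \<Rightarrow> alg" where
  "galg q \<alpha> n p t = (let Ys = YS q \<alpha> n; j = dec (BB q \<alpha> n) t in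
      if j < length Ys \<and> length p < n then (Ys ! j ! length p) mod q else 0)"

lemma dec_surj: "j < 2^b \<Longrightarrow> \<exists>t. dec b t = j"
proof (induction b arbitrary: j)
  case 0 then show ?case by (simp add: dec_def)
next
  case (Suc b)
  have decS: "dec (Suc b) t = dec b t + (if t b then 2^b else 0)" for t
    by (simp add: dec_def)
  have decup: "dec b (t(b := v)) = dec b t" for t v
    unfolding dec_def by (intro sum.cong) auto
  show ?case
  proof (cases "j < 2^b")
    case True
    then obtain t where "dec b t = j" using Suc.IH by blast
    then have "dec (Suc b) (t(b := False)) = j" using decS decup by simp
    then show ?thesis by blast
  next
    case False
    then have "j - 2^b < 2^b" using Suc.prems by simp
    then obtain t where "dec b t = j - 2^b" using Suc.IH by blast
    then have "dec (Suc b) (t(b := True)) = j" using decS decup False by simp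
    then show ?thesis by blast
  qed
qed

lemma dec_local: "(\<forall>j<b. t' j = t j) \<Longrightarrow> dec b t' = dec b t"
  unfolding dec_def by (intro sum.cong) auto

lemma basics:
  fixes \<alpha> :: real
  assumes q: "q \<ge> 2" and a0: "0 < \<alpha>" and a1: "\<alpha> < 1 / real q"
  shows "kk \<alpha> n \<le> n" "LL q \<alpha> n \<ge> 1" "LL q \<alpha> n \<le> q^n" "real (kk \<alpha> n) \<le> \<alpha> * n"
    "\<forall>x\<in>words q n. LL q \<alpha> n \<le> card {y\<in>words q n. agree x y \<le> kk \<alpha> n}"
proof -
  have "1 / real q \<le> 1/2" using q by (simp add: field_simps)
  then have a2: "\<alpha> < 1" using a1 by linarith
  show k1: "real (kk \<alpha> n) \<le> \<alpha> * n" unfolding kk_def using a0 by (simp add: of_nat_nat)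
  have "\<alpha> * n \<le> n" using a2 a0 by (intro mult_left_le_one_le) auto
  then show kn: "kk \<alpha> n \<le> n" using k1 by linarith
  show "LL q \<alpha> n \<ge> 1" unfolding LL_def using q zero_less_binomial[OF kn]
    by (simp add: Suc_le_eq)
  have q1: "q \<ge> 1" using q by simp
  show ball: "\<forall>x\<in>words q n. LL q \<alpha> n \<le> card {y\<in>words q n. agree x y \<le> kk \<alpha> n}"
  proof
    fix x assume x: "x \<in> words q n"
    have "LL q \<alpha> n = card {y\<in>words q n. agree x y = kk \<alpha> n}"
      unfolding LL_def using exact_count[OF q1 x] by simp
    also have "\<dots> \<le> card {y\<in>words q n. agree x y \<le> kk \<alpha> n}"
      using finite_words by (intro card_mono) auto
    finally show "LL q \<alpha> n \<le> card {y\<in>words q n. agree x y \<le> kk \<alpha> n}" .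
  qed
  have "LL q \<alpha> n \<le> card {y\<in>words q n. agree (replicate n 0) y \<le> kk \<alpha> n}"
    using ball words_ne[OF q1] by blast
  also have "\<dots> \<le> card (words q n)" using finite_words by (intro card_mono) auto
  finally show "LL q \<alpha> n \<le> q^n" using card_words by simp
qed

lemma good_ex:
  fixes \<alpha> :: real
  assumes q: "q \<ge> 2" and a0: "0 < \<alpha>" and a1: "\<alpha> < 1 / real q"
  shows "\<exists>Ys. good q \<alpha> n Ys"
proof -
  note B = basics[OF q a0 a1, of n]
  have q1: "q \<ge> 1" using q by simp
  define N where "N = real (q^n)"
  define L where "L = real (LL q \<alpha> n)"
  define m where "m = MM q \<alpha> n"
  have Npos: "N \<ge> 1" unfolding N_def using q by simp
  have Lpos: "L \<ge> 1" unfolding L_def using B by simp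
  have LN: "L \<le> N" unfolding L_def N_def using B(3) by simp
  obtain Ys where Ys: "length Ys = m" "set Ys \<subseteq> words q n"
    "real (card {x\<in>words q n. \<forall>y\<in>set Ys. kk \<alpha> n < agree x y}) \<le> N * (1 - L / N)^m"
    using greedy[OF q1 B(5), of m] unfolding N_def L_def by blast
  have mgt: "real m > N / L * ln N"
    unfolding m_def MM_def N_def L_def by linarith
  have z0: "0 \<le> 1 - L / N" using LN Npos by (simp add: field_simps)
  have "(1 - L / N)^m \<le> exp (- (L / N)) ^ m"
    using z0 exp_ge_add_one_self[of "- (L/N)"] by (intro power_mono) auto
  also have "\<dots> = exp (- (real m * L / N))"
    by (simp add: exp_of_nat_mult[symmetric])
  also have "\<dots> < exp (- ln N)"
  proof -
    have "N / L * ln N * (L / N) < real m * (L / N)"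
      using mgt Lpos Npos by (intro mult_strict_right_mono) auto
    then have "ln N < real m * L / N" using Lpos Npos by simp
    then show ?thesis by simp
  qed
  also have "\<dots> = 1 / N" using Npos by (simp add: exp_minus divide_inverse)
  finally have "N * (1 - L / N)^m < N * (1 / N)" using Npos by (intro mult_strict_left_mono) auto
  then have "real (card {x\<in>words q n. \<forall>y\<in>set Ys. kk \<alpha> n < agree x y}) < 1"
    using Ys(3) Npos by simp
  then have "card {x\<in>words q n. \<forall>y\<in>set Ys. kk \<alpha> n < agree x y} = 0" by simp
  then have "{x\<in>words q n. \<forall>y\<in>set Ys. kk \<alpha> n < agree x y} = {}"
  proof -
    have "finite {x\<in>words q n. \<forall>y\<in>set Ys. kk \<alpha> n < agree x y}"
      using finite_words by simp
    then show ?thesis using \<open>card {x\<in>words q n. \<forall>y\<in>set Ys. kk \<alpha> n < agree x y} = 0\<close> by simp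
  qed
  then have "\<forall>x\<in>words q n. \<exists>y\<in>set Ys. agree x y \<le> kk \<alpha> n"
  proof (intro ballI)
    fix x assume x: "x \<in> words q n"
    show "\<exists>y\<in>set Ys. agree x y \<le> kk \<alpha> n"
    proof (rule ccontr)
      assume "\<not> ?thesis"
      then have "x \<in> {x\<in>words q n. \<forall>y\<in>set Ys. kk \<alpha> n < agree x y}"
        using x by (auto simp: not_le)
      then show False using \<open>{x\<in>words q n. \<forall>y\<in>set Ys. kk \<alpha> n < agree x y} = {}\<close> by blast
    qed
  qed
  then show ?thesis using Ys unfolding good_def m_def by blast
qed

lemma MM_ge1: "MM q \<alpha> n \<ge> 1" unfolding MM_def by simp

lemma b_bound:
  fixes \<alpha> :: real
  assumes q: "q \<ge> 2" and a0: "0 < \<alpha>" and a1: "\<alpha> < 1 / real q"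
  shows "real (BB q \<alpha> n) \<le> K (1 / real q) \<alpha> * real n
           + 6 * (log 2 (real n) + log 2 (log 2 (real q)) + 1)"
proof -
  note B = basics[OF q a0 a1, of n]
  have lq1: "log 2 (real q) \<ge> 1" using q by simp
  have llq: "log 2 (log 2 (real q)) \<ge> 0" using lq1 by simp
  define N where "N = real (q^n)"
  define L where "L = real (LL q \<alpha> n)"
  define M where "M = real (MM q \<alpha> n)"
  have Npos: "N \<ge> 1" unfolding N_def using q by simp
  have Lpos: "L \<ge> 1" unfolding L_def using B by simp
  have LN: "L \<le> N" unfolding L_def N_def using B(3) by simp
  have M1: "M \<ge> 1" unfolding M_def using MM_ge1[of q \<alpha> n] by simp
  have lM0: "log 2 M \<ge> 0" using M1 by simp
  have BBle: "real (BB q \<alpha> n) \<le> log 2 M + 1"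
    unfolding BB_def M_def[symmetric] using lM0 by linarith
  show ?thesis
  proof (cases "n = 0")
    case True
    then have "N = 1" unfolding N_def by simp
    then have "M = 1" unfolding M_def MM_def N_def[symmetric] L_def[symmetric] by simp
    then have "real (BB q \<alpha> n) = 0" unfolding BB_def M_def[symmetric] by simp
    then show ?thesis using True llq by (simp add: log_def)
  next
    case False
    then have n1: "n \<ge> 1" by simp
    have ln0: "ln N \<ge> 0" using Npos by simp
    have NL1: "N / L \<ge> 1" using LN Lpos by simp
    have x0: "N / L * ln N \<ge> 0" using ln0 NL1 by (intro mult_nonneg_nonneg) auto
    then have "real (nat \<lfloor>N / L * ln N\<rfloor>) = real_of_int \<lfloor>N / L * ln N\<rfloor>" by simp
    also have "\<dots> \<le> N / L * ln N" by simp
    finally have fl: "real (nat \<lfloor>N / L * ln N\<rfloor>) \<le> N / L * ln N" .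
    have "M \<le> N / L * ln N + 1"
      unfolding M_def MM_def N_def[symmetric] L_def[symmetric]
      using fl by simp
    also have "\<dots> \<le> N / L * (ln N + 1)" using NL1 by (simp add: algebra_simps)
    finally have Mle: "M \<le> N / L * (ln N + 1)" .
    have "log 2 M \<le> log 2 (N / L * (ln N + 1))"
      using Mle M1 by (subst log_le_cancel_iff) auto
    also have "\<dots> = log 2 N - log 2 L + log 2 (ln N + 1)"
      using Npos Lpos ln0 by (simp add: log_mult log_divide add_nonneg_eq_0_iff)
    finally have lM: "log 2 M \<le> log 2 N - log 2 L + log 2 (ln N + 1)" .
    have lb: "log 2 N - log 2 L \<le> real n * K (1 / real q) \<alpha> + 2 * log 2 n + 4"
      using log_bound[OF q a0 a1 n1 refl] unfolding N_def L_def LL_def kk_def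
      by (simp add: of_nat_mult of_nat_power)
    have lnN: "ln N = real n * ln (real q)" unfolding N_def using q by (simp add: ln_realpow)
    have lnq: "ln (real q) \<le> log 2 (real q)"
    proof -
      have "ln (real q) \<ge> 0" using q by simp
      moreover have "ln (2::real) \<le> 1" using ln_2_less_1 by simp
      moreover have "ln (2::real) > 0" by simp
      ultimately show ?thesis unfolding log_def by (simp add: le_divide_eq mult_right_le_one_le)
    qed
    have "ln N + 1 \<le> real n * log 2 (real q) + real n * log 2 (real q)"
    proof -
      have "real n * ln (real q) \<le> real n * log 2 (real q)" using lnq by (intro mult_left_mono) auto
      moreover have "1 * 1 \<le> real n * log 2 (real q)" using n1 lq1
        by (intro mult_mono) auto
      ultimately show ?thesis using lnN by linarith
    qed
    then have "log 2 (ln N + 1) \<le> log 2 (2 * real n * log 2 (real q))"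
      using ln0 by (subst log_le_cancel_iff) auto
    also have "\<dots> = 1 + log 2 n + log 2 (log 2 (real q))"
      using n1 lq1 by (simp add: log_mult)
    finally have l2: "log 2 (ln N + 1) \<le> 1 + log 2 n + log 2 (log 2 (real q))" .
    have ln0': "log 2 (real n) \<ge> 0" using n1 by simp
    show ?thesis using BBle lM lb l2 ln0' llq by (simp add: algebra_simps)
  qed
qed

lemma MM_le: "MM q \<alpha> n \<le> 2 ^ BB q \<alpha> n"
proof -
  define M where "M = real (MM q \<alpha> n)"
  have M1: "M \<ge> 1" unfolding M_def using MM_ge1[of q \<alpha> n] by simp
  have "log 2 M \<le> real (BB q \<alpha> n)" unfolding BB_def M_def[symmetric] using M1
    by (simp add: of_nat_nat)
  then have "2 powr log 2 M \<le> 2 powr real (BB q \<alpha> n)" by simp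
  then have "M \<le> 2 ^ BB q \<alpha> n" using M1 by (simp add: powr_realpow)
  then show ?thesis unfolding M_def by (metis of_nat_le_iff of_nat_numeral of_nat_power)
qed

theorem theorem11:
  shows "\<exists>C::real. \<forall>q::nat. \<forall>\<alpha>::real. q \<ge> 2 \<and> 0 < \<alpha> \<and> \<alpha> < 1 / real q \<longrightarrow>
     K (1 / real q) \<alpha> = (1 - h q (1 - \<alpha>)) * log 2 (real q) \<and>
     (\<exists>A. valid_alg q A \<and>
        (\<forall>x. set x \<subseteq> {..<q} \<longrightarrow>
           (\<exists>t b. real (cost A x t) \<le> \<alpha> * real (length x) \<and>
                  reads_at_most A x t b \<and>
                  real b \<le> K (1 / real q) \<alpha> * real (length x)
                           + C * (log 2 (real (length x)) + log 2 (log 2 (real q)) + 1))))"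
proof (intro exI[of _ 6] allI impI)
  fix q :: nat and \<alpha> :: real
  assume "q \<ge> 2 \<and> 0 < \<alpha> \<and> \<alpha> < 1 / real q"
  then have q: "q \<ge> 2" and a0: "0 < \<alpha>" and a1: "\<alpha> < 1 / real q" by auto
  have "1 / real q \<le> 1/2" using q by (simp add: field_simps)
  then have a2: "\<alpha> < 1" using a1 by linarith
  have valid: "valid_alg q (galg q \<alpha>)"
    unfolding valid_alg_def galg_def Let_def using q by auto
  have main: "\<exists>t b. real (cost (galg q \<alpha>) x t) \<le> \<alpha> * real (length x) \<and>
                  reads_at_most (galg q \<alpha>) x t b \<and>
                  real b \<le> K (1 / real q) \<alpha> * real (length x)
                           + 6 * (log 2 (real (length x)) + log 2 (log 2 (real q)) + 1)"
    if xq: "set x \<subseteq> {..<q}" for x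
  proof -
    define n where "n = length x"
    have xw: "x \<in> words q n" unfolding words_def n_def using xq by simp
    define Ys where "Ys = YS q \<alpha> n"
    have g: "good q \<alpha> n Ys" unfolding Ys_def YS_def
      using good_ex[OF q a0 a1, of n] by (rule someI_ex)
    then obtain y where y: "y \<in> set Ys" "agree x y \<le> kk \<alpha> n"
      unfolding good_def using xw by blast
    then obtain j where j: "j < length Ys" "Ys ! j = y" by (metis in_set_conv_nth)
    have yw: "y \<in> words q n" using g y(1) unfolding good_def by blast
    have "j < 2 ^ BB q \<alpha> n" using j(1) g MM_le[of q \<alpha> n] unfolding good_def by simp
    then obtain t where t: "dec (BB q \<alpha> n) t = j" using dec_surj by blast
    have out: "galg q \<alpha> n (take i x) t = y ! i" if "i < n" for i
    proof -
      have "y ! i \<in> set y" using yw that unfolding words_def by auto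
      then have "y ! i < q" using yw unfolding words_def by auto
      then show ?thesis unfolding galg_def Let_def Ys_def[symmetric] t
        using j that n_def by simp
    qed
    have "cost (galg q \<alpha>) x t = card {i. i < length x \<and> y ! i = x ! i}"
      unfolding cost_def n_def[symmetric] using out by (metis (no_types, lifting))
    also have "\<dots> = agree x y" using yw unfolding words_def n_def by (intro agree_card) simp
    finally have c: "cost (galg q \<alpha>) x t \<le> kk \<alpha> n" using y(2) by simp
    have "real (kk \<alpha> n) \<le> \<alpha> * real n" using basics[OF q a0 a1] by blast
    then have c': "real (cost (galg q \<alpha>) x t) \<le> \<alpha> * real (length x)"
      using c n_def by (metis of_nat_le_iff order_trans)
    have r: "reads_at_most (galg q \<alpha>) x t (BB q \<alpha> n)"
      unfolding reads_at_most_def n_def[symmetric]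
    proof (intro allI impI)
      fix t' i assume "\<forall>j<BB q \<alpha> n. t' j = t j"
      then have "dec (BB q \<alpha> n) t' = dec (BB q \<alpha> n) t" by (rule dec_local)
      then show "galg q \<alpha> n (take i x) t' = galg q \<alpha> n (take i x) t"
        unfolding galg_def Let_def by simp
    qed
    show ?thesis using c' r b_bound[OF q a0 a1, of n] n_def by blast
  qed
  show "K (1 / real q) \<alpha> = (1 - h q (1 - \<alpha>)) * log 2 (real q) \<and>
     (\<exists>A. valid_alg q A \<and>
        (\<forall>x. set x \<subseteq> {..<q} \<longrightarrow>
           (\<exists>t b. real (cost A x t) \<le> \<alpha> * real (length x) \<and>
                  reads_at_most A x t b \<and>
                  real b \<le> K (1 / real q) \<alpha> * real (length x)
                           + 6 * (log 2 (real (length x)) + log 2 (log 2 (real q)) + 1))))"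
    using K_ident[OF q a0 a2] valid main by blast
qed


end
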